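(* Let $R$ be a commutative unital ring, $G$ a group and $(\mathcal B_1,\Phi_1)\subseteq(\mathcal B_2,\Phi_2)$ a partial subaction of $G$ on generalized Boolean algebras with $\Phi_k=(\{\mathcal I_{k,t}\},\{\phi_{k,t}\})$, and let $A_k=\mathrm{Lc}(R,\mathcal B_k)\rtimes_{\Phi_k}G$, with $A_1\subseteq A_2$. Suppose $\mathcal B_1$ is an ideal of $\mathcal B_2$, and suppose $C_1$ is a cover of $\mathcal B_1$ and, for each $g\in G$, $C_g$ is a cover of $\mathcal I_{2,g}$, such that for all $g\in G$, $X,Y\in C_1$ and $V\in C_{g^{-1}}$ there exists $Z\in\mathcal I_{1,g}$ with $X\cap\phi_{2,g}(Y\cap V)\le Z$. Then for every $U\in\mathcal B_1$, $(U\delta_e)A_1(U\delta_e)=(U\delta_e)A_2(U\delta_e)$.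
   Context: A generalized Boolean algebra is a distributive relatively complemented lattice with least element $0$; an ideal is a subset closed under finite joins and under meets with arbitrary elements; a cover of $\mathcal B$ (or of an ideal $\mathcal I$) is a subset $C$ such that every element is $\le$ a finite join of elements of $C$. A partial action $\Phi$ of $G$ on $\mathcal B$: ideals $\mathcal I_t$ and isomorphisms $\phi_t:\mathcal I_{t^{-1}}\to\mathcal I_t$ with $\mathcal I_e=\mathcal B$, $\phi_e=\mathrm{id}$, $\phi_s(\mathcal I_{s^{-1}}\cap\mathcal I_t)=\mathcal I_s\cap\mathcal I_{st}$, $\phi_s\phi_t=\phi_{st}$ where defined. A partial subaction: $\mathcal B_1\subseteq\mathcal B_2$ sub generalized Boolean algebra, $\mathcal I_{1,t}\subseteq\mathcal I_{2,t}$, $\phi_{2,t}$ restricting to $\phi_{1,t}$. $\mathrm{Lc}(R,\mathcal B)$ is the algebra of locally constant compactly supported $R$-valued functions on the Stone space of $\mathcal B$, spanned by idempotents $1_U$; $\mathrm{Lc}(R,\mathcal B)\rtimes_\Phi G=\bigoplus_g\mathrm{Lc}(R,\mathcal I_g)\delta_g$ with $U\delta_g:=1_U\delta_g$ and $(U\delta_g)(V\delta_h)=\phi_g(\phi_{g^{-1}}(U)\cap V)\delta_{gh}$. $A_1$ is identified with the $R$-span of $\{U\delta_g:U\in\mathcal I_{1,g}\}$ in $A_2$. *)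

theory Defs
  imports Main
begin

text \<open>Generalized Boolean algebras are represented (via Stone representation) as
  rings of sets: families of subsets of a type closed under empty set, binary
  union, intersection and relative difference.\<close>

definition gen_bool_alg :: "'x set set \<Rightarrow> bool" where
  "gen_bool_alg B \<longleftrightarrow> {} \<in> B \<and>
     (\<forall>U\<in>B. \<forall>V\<in>B. U \<union> V \<in> B \<and> U \<inter> V \<in> B \<and> U - V \<in> B)"

definition gba_ideal :: "'x set set \<Rightarrow> 'x set set \<Rightarrow> bool" where
  "gba_ideal I B \<longleftrightarrow> I \<subseteq> B \<and> {} \<in> I \<and>
     (\<forall>U\<in>I. \<forall>V\<in>I. U \<union> V \<in> I) \<and> (\<forall>U\<in>I. \<forall>V\<in>B. U \<inter> V \<in> I)"

definition is_cover :: "'x set set \<Rightarrow> 'x set set \<Rightarrow> bool" where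
  "is_cover C I \<longleftrightarrow> C \<subseteq> I \<and> (\<forall>U\<in>I. \<exists>F. finite F \<and> F \<subseteq> C \<and> U \<subseteq> \<Union>F)"

text \<open>Partial action of a group (written additively: e = 0, st = s + t, t^-1 = - t)
  on the generalized Boolean algebra B: ideals I t and isomorphisms
  phi t : I (-t) \<rightarrow> I t.\<close>
definition partial_action ::
  "'x set set \<Rightarrow> ('g::group_add \<Rightarrow> 'x set set) \<Rightarrow> ('g \<Rightarrow> 'x set \<Rightarrow> 'x set) \<Rightarrow> bool" where
  "partial_action B I \<phi> \<longleftrightarrow>
     gen_bool_alg B \<and> I 0 = B \<and> (\<forall>U\<in>B. \<phi> 0 U = U) \<and>
     (\<forall>t. gba_ideal (I t) B) \<and>
     (\<forall>t. bij_betw (\<phi> t) (I (- t)) (I t)) \<and>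
     (\<forall>t. \<forall>U\<in>I (- t). \<forall>V\<in>I (- t).
          \<phi> t (U \<union> V) = \<phi> t U \<union> \<phi> t V \<and> \<phi> t (U \<inter> V) = \<phi> t U \<inter> \<phi> t V) \<and>
     (\<forall>s t. \<phi> s ` (I (- s) \<inter> I t) = I s \<inter> I (s + t)) \<and>
     (\<forall>s t U. U \<in> I (- t) \<and> \<phi> t U \<in> I (- s) \<longrightarrow> \<phi> s (\<phi> t U) = \<phi> (s + t) U)"

definition partial_subaction ::
  "'x set set \<Rightarrow> ('g::group_add \<Rightarrow> 'x set set) \<Rightarrow> ('g \<Rightarrow> 'x set \<Rightarrow> 'x set) \<Rightarrow>
   'x set set \<Rightarrow> ('g \<Rightarrow> 'x set set) \<Rightarrow> ('g \<Rightarrow> 'x set \<Rightarrow> 'x set) \<Rightarrow> bool" where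
  "partial_subaction B1 I1 \<phi>1 B2 I2 \<phi>2 \<longleftrightarrow>
     partial_action B1 I1 \<phi>1 \<and> partial_action B2 I2 \<phi>2 \<and> B1 \<subseteq> B2 \<and>
     (\<forall>t. I1 t \<subseteq> I2 t) \<and> (\<forall>t. \<forall>U\<in>I1 (- t). \<phi>1 t U = \<phi>2 t U)"

text \<open>Indicator function and Lc(R, B): the R-span of the indicators 1_U, U in B
  (= locally constant compactly supported functions on the Stone space).\<close>
definition ind :: "'x set \<Rightarrow> 'x \<Rightarrow> 'r::comm_ring_1" where
  "ind U x = (if x \<in> U then 1 else 0)"

definition Lc :: "'x set set \<Rightarrow> ('x \<Rightarrow> 'r::comm_ring_1) set" where
  "Lc B = {f. \<exists>S c. finite S \<and> S \<subseteq> B \<and> f = (\<lambda>x. \<Sum>U\<in>S. c U * ind U x)}"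

definition act :: "('g \<Rightarrow> 'x set \<Rightarrow> 'x set) \<Rightarrow> 'g \<Rightarrow> ('x \<Rightarrow> 'r::comm_ring_1) \<Rightarrow> 'x \<Rightarrow> 'r" where
  "act \<phi> g f = (\<lambda>x. \<Sum>r\<in>range f - {0}. r * ind (\<phi> g (f -` {r})) x)"

text \<open>The partial crossed product Lc(R,B) \<rtimes> G: finitely supported families
  a g \<in> Lc(R, I g), a = sum_g (a g) delta_g.\<close>
definition CP :: "('g::group_add \<Rightarrow> 'x set set) \<Rightarrow> ('g \<Rightarrow> 'x \<Rightarrow> 'r::comm_ring_1) set" where
  "CP I = {a. finite {g. a g \<noteq> (\<lambda>_. 0)} \<and> (\<forall>g. a g \<in> Lc (I g))}"

text \<open>Multiplication: (a delta_g)(b delta_h) = phi_g(phi_{g^-1}(a) b) delta_{gh}.\<close>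
definition cp_mult :: "('g::group_add \<Rightarrow> 'x set \<Rightarrow> 'x set) \<Rightarrow>
    ('g \<Rightarrow> 'x \<Rightarrow> 'r::comm_ring_1) \<Rightarrow> ('g \<Rightarrow> 'x \<Rightarrow> 'r) \<Rightarrow> ('g \<Rightarrow> 'x \<Rightarrow> 'r)" where
  "cp_mult \<phi> a b = (\<lambda>k x. \<Sum>g\<in>{g. a g \<noteq> (\<lambda>_. 0)}.
       act \<phi> g (\<lambda>y. act \<phi> (- g) (a g) y * b (- g + k) y) x)"

definition delta :: "'x set \<Rightarrow> 'g::group_add \<Rightarrow> 'g \<Rightarrow> 'x \<Rightarrow> 'r::comm_ring_1" where
  "delta U g = (\<lambda>k. if k = g then ind U else (\<lambda>_. 0))"

end

theory Submission
  imports Defs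
begin



definition smp :: "'x set set \<Rightarrow> ('x \<Rightarrow> 'r::zero) \<Rightarrow> bool" where
  "smp B f \<longleftrightarrow> finite (range f) \<and> (\<forall>r. r \<noteq> 0 \<longrightarrow> f -` {r} \<in> B)"

lemma fun_eq_pre:
  fixes f g :: "'x \<Rightarrow> 'r::zero"
  assumes "\<And>r. r \<noteq> 0 \<Longrightarrow> f -` {r} = g -` {r}"
  shows "f = g"
proof
  fix x
  show "f x = g x"
  proof (cases "f x = 0")
    case True
    show ?thesis
    proof (rule ccontr)
      assume "f x \<noteq> g x"
      then have "g x \<noteq> 0" using True by simp
      then have "x \<in> f -` {g x}" using assms[of "g x"] by auto
      then show False using True \<open>g x \<noteq> 0\<close> by simp
    qed
  next
    case False
    then have "x \<in> g -` {f x}" using assms[of "f x"] by auto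
    then show ?thesis by simp
  qed
qed

lemma gba_union_fin:
  assumes "{} \<in> B" "\<forall>U\<in>B. \<forall>V\<in>B. U \<union> V \<in> B" "finite A" "A \<subseteq> B"
  shows "\<Union>A \<in> B"
  using assms(3,4)
proof (induction A rule: finite_induct)
  case empty then show ?case using assms(1) by simp
next
  case (insert x F) then show ?case using assms(2) by simp
qed

lemma ideal_gba:
  assumes "gba_ideal I B" "gen_bool_alg B"
  shows "gen_bool_alg I"
proof -
  have "\<forall>U\<in>I. \<forall>V\<in>I. U - V \<in> I"
  proof (intro ballI)
    fix U V assume "U \<in> I" "V \<in> I"
    then have "U - V \<in> B" using assms unfolding gba_ideal_def gen_bool_alg_def by blast
    then have "U \<inter> (U - V) \<in> I" using assms \<open>U \<in> I\<close> unfolding gba_ideal_def by blast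
    then show "U - V \<in> I" by (simp add: Int_absorb1)
  qed
  moreover have "\<forall>U\<in>I. \<forall>V\<in>I. U \<inter> V \<in> I"
    using assms unfolding gba_ideal_def by blast
  ultimately show ?thesis using assms unfolding gba_ideal_def gen_bool_alg_def by blast
qed

lemma supp_in:
  fixes f :: "'x \<Rightarrow> 'r::zero"
  assumes "gen_bool_alg B" "smp B f"
  shows "{x. f x \<noteq> 0} \<in> B"
proof -
  have "{x. f x \<noteq> 0} = \<Union>((\<lambda>r. f -` {r}) ` (range f - {0}))" by auto
  moreover have "\<Union>((\<lambda>r. f -` {r}) ` (range f - {0})) \<in> B"
    apply (rule gba_union_fin)
    using assms unfolding gen_bool_alg_def smp_def by auto
  ultimately show ?thesis by simp
qed

lemma Lc_smp:
  fixes f :: "'x \<Rightarrow> 'r::comm_ring_1"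
  assumes g: "gen_bool_alg B" and f: "f \<in> Lc B"
  shows "smp B f"
proof -
  obtain S c where S: "finite S" "S \<subseteq> B" and fe: "f = (\<lambda>x. \<Sum>U\<in>S. c U * ind U x)"
    using f unfolding Lc_def by blast
  have "smp B (\<lambda>x. \<Sum>U\<in>S. c U * ind U x)"
    using S
  proof (induction S rule: finite_induct)
    case empty
    then show ?case using g unfolding smp_def gen_bool_alg_def by auto
  next
    case (insert V F)
    define h where "h = (\<lambda>x. \<Sum>U\<in>F. c U * ind U x)"
    have hs: "smp B h" using insert h_def by auto
    have V: "V \<in> B" using insert by auto
    have eq: "(\<lambda>x. \<Sum>U\<in>insert V F. c U * ind U x) = (\<lambda>x. c V * ind V x + h x)"
      using insert by (simp add: h_def)
    have rng: "range (\<lambda>x. c V * ind V x + h x) \<subseteq> range h \<union> (\<lambda>s. c V + s) ` range h"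
      by (auto simp: ind_def)
    have pre: "(\<lambda>x. c V * ind V x + h x) -` {r} = (h -` {r} - V) \<union> (V \<inter> h -` {r - c V})" for r
      by (auto simp: ind_def algebra_simps)
    have sup: "{x. h x \<noteq> 0} \<in> B" using supp_in[OF g hs] .
    have "(\<lambda>x. c V * ind V x + h x) -` {r} \<in> B" if "r \<noteq> 0" for r
    proof -
      have a: "h -` {r} - V \<in> B" using hs that V g unfolding smp_def gen_bool_alg_def by blast
      have b: "V \<inter> h -` {r - c V} \<in> B"
      proof (cases "r - c V = 0")
        case True
        then have "V \<inter> h -` {r - c V} = V - {x. h x \<noteq> 0}" by auto
        then show ?thesis using sup V g unfolding gen_bool_alg_def by simp
      next
        case False
        then show ?thesis using hs V g unfolding smp_def gen_bool_alg_def by blast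
      qed
      show ?thesis unfolding pre using a b g unfolding gen_bool_alg_def by blast
    qed
    moreover have "finite (range (\<lambda>x. c V * ind V x + h x))"
      using rng hs unfolding smp_def by (meson finite_UnI finite_imageI finite_subset)
    ultimately show ?case unfolding eq smp_def by blast
  qed
  then show ?thesis using fe by simp
qed

lemma smp_Lc:
  fixes f :: "'x \<Rightarrow> 'r::comm_ring_1"
  assumes "smp B f"
  shows "f \<in> Lc B"
proof -
  define S where "S = (\<lambda>r. f -` {r}) ` (range f - {0})"
  define c where "c = (\<lambda>U. f (SOME x. x \<in> U))"
  have inj: "inj_on (\<lambda>r. f -` {r}) (range f - {0})"
    by (rule inj_onI) blast
  have fin: "finite S" using assms unfolding smp_def S_def by simp
  have sub: "S \<subseteq> B" using assms unfolding smp_def S_def by auto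
  have "f x = (\<Sum>U\<in>S. c U * ind U x)" for x
  proof -
    have "(\<Sum>U\<in>S. c U * ind U x) = (\<Sum>r\<in>range f - {0}. c (f -` {r}) * ind (f -` {r}) x)"
      unfolding S_def by (simp add: sum.reindex[OF inj])
    also have "\<dots> = (\<Sum>r\<in>range f - {0}. (if r = f x then r else 0))"
    proof (rule sum.cong)
      fix r assume r: "r \<in> range f - {0}"
      then have "\<exists>y. y \<in> f -` {r}" by auto
      then have "c (f -` {r}) = r" unfolding c_def by (metis (mono_tags) someI_ex vimage_singleton_eq)
      then show "c (f -` {r}) * ind (f -` {r}) x = (if r = f x then r else 0)"
        by (auto simp: ind_def)
    qed simp
    also have "\<dots> = f x"
      using assms unfolding smp_def by (auto simp: sum.delta')
    finally show ?thesis by simp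
  qed
  then show ?thesis using fin sub unfolding Lc_def by blast
qed





lemma pa_basic:
  assumes "partial_action B I \<phi>"
  shows "gen_bool_alg B" "I 0 = B" "\<And>U. U \<in> B \<Longrightarrow> \<phi> 0 U = U" "gba_ideal (I t) B"
    "bij_betw (\<phi> t) (I (- t)) (I t)"
    "\<And>U V. U \<in> I (- t) \<Longrightarrow> V \<in> I (- t) \<Longrightarrow> \<phi> t (U \<inter> V) = \<phi> t U \<inter> \<phi> t V"
    "\<And>U V. U \<in> I (- t) \<Longrightarrow> V \<in> I (- t) \<Longrightarrow> \<phi> t (U \<union> V) = \<phi> t U \<union> \<phi> t V"
  using assms unfolding partial_action_def by auto

lemma pa_gbaI:
  assumes "partial_action B I \<phi>"
  shows "gen_bool_alg (I t)"
  using ideal_gba pa_basic[OF assms] by blast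

lemma pa_subB:
  assumes "partial_action B I \<phi>" "U \<in> I t"
  shows "U \<in> B"
  using pa_basic(4)[OF assms(1)] assms(2) unfolding gba_ideal_def by blast

lemma pa_int:
  assumes "partial_action B I \<phi>" "U \<in> I t" "V \<in> B"
  shows "U \<inter> V \<in> I t" "V \<inter> U \<in> I t"
  using pa_basic(4)[OF assms(1), of t] assms(2,3) unfolding gba_ideal_def by (auto simp: Int_commute)

lemma pa_img:
  assumes "partial_action B I \<phi>" "U \<in> I (- t)"
  shows "\<phi> t U \<in> I t"
  using pa_basic(5)[OF assms(1), of t] assms(2) unfolding bij_betw_def by blast

lemma pa_empty:
  assumes "partial_action B I \<phi>"
  shows "\<phi> t {} = {}"
proof -
  have e: "{} \<in> I t" "{} \<in> I (- t)" using pa_basic(4)[OF assms] unfolding gba_ideal_def by auto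
  then obtain A where A: "A \<in> I (- t)" "\<phi> t A = {}"
    using pa_basic(5)[OF assms, of t] unfolding bij_betw_def by (metis imageE)
  have "\<phi> t ({} \<inter> A) = \<phi> t {} \<inter> \<phi> t A" using pa_basic(6)[OF assms] e A by blast
  then show ?thesis using A by simp
qed

lemma pa_mono:
  assumes "partial_action B I \<phi>" "U \<in> I (- t)" "V \<in> I (- t)" "U \<subseteq> V"
  shows "\<phi> t U \<subseteq> \<phi> t V"
proof -
  have "\<phi> t (U \<inter> V) = \<phi> t U \<inter> \<phi> t V" using pa_basic(6)[OF assms(1)] assms by blast
  moreover have "U \<inter> V = U" using assms(4) by blast
  ultimately have "\<phi> t U = \<phi> t U \<inter> \<phi> t V" by simp
  then show ?thesis by (metis Int_lower2)
qed

lemma pa_inv: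
  assumes "partial_action B I \<phi>" "A \<in> I t"
  shows "\<phi> t (\<phi> (- t) A) = A"
proof -
  have "A \<in> I (- (- t))" using assms by simp
  then have im: "\<phi> (- t) A \<in> I (- t)" using pa_img[OF assms(1)] by blast
  have c: "\<forall>s t U. U \<in> I (- t) \<and> \<phi> t U \<in> I (- s) \<longrightarrow> \<phi> s (\<phi> t U) = \<phi> (s + t) U"
    using assms(1) unfolding partial_action_def by (elim conjE) assumption
  have "\<phi> t (\<phi> (- t) A) = \<phi> (t + - t) A"
    using spec[OF spec[OF spec[OF c, of t], of "- t"], of A] \<open>A \<in> I (- (- t))\<close> im by blast
  then show ?thesis using pa_basic(3)[OF assms(1)] pa_subB[OF assms] by simp
qed

lemma pa_Union:
  assumes "partial_action B I \<phi>" "finite A" "A \<subseteq> I (- t)"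
  shows "\<Union>A \<in> I (- t) \<and> \<phi> t (\<Union>A) = \<Union>(\<phi> t ` A)"
  using assms(2,3)
proof (induction A rule: finite_induct)
  case empty
  have "{} \<in> I (- t)" using pa_basic(4)[OF assms(1)] unfolding gba_ideal_def by blast
  then show ?case using pa_empty[OF assms(1)] by simp
next
  case (insert x F)
  then have u: "\<Union>F \<in> I (- t)" "\<phi> t (\<Union>F) = \<Union>(\<phi> t ` F)" and x: "x \<in> I (-t)" by auto
  have "x \<union> \<Union>F \<in> I (- t)" using u x pa_gbaI[OF assms(1), of "- t"] unfolding gen_bool_alg_def by blast
  moreover have "\<phi> t (x \<union> \<Union>F) = \<phi> t x \<union> \<phi> t (\<Union>F)" using pa_basic(7)[OF assms(1)] u x by blast
  ultimately show ?case using u by simp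
qed




lemma act_pre:
  fixes f :: "'x \<Rightarrow> 'r::comm_ring_1"
  assumes pa: "partial_action B I \<phi>" and s: "smp (I (- g)) f" and r: "r \<noteq> 0"
  shows "(act \<phi> g f) -` {r} = \<phi> g (f -` {r})"
proof -
  have key: "act \<phi> g f x = s" if "s \<noteq> 0" "x \<in> \<phi> g (f -` {s})" for s x
  proof -
    have "f -` {s} \<noteq> {}"
    proof
      assume "f -` {s} = {}"
      then show False using that(2) pa_empty[OF pa, of g] by simp
    qed
    then have sr: "s \<in> range f - {0}" using that by auto
    have "(\<Sum>t\<in>range f - {0}. t * ind (\<phi> g (f -` {t})) x) = (\<Sum>t\<in>range f - {0}. if t = s then t else 0)"
    proof (rule sum.cong)
      fix t assume t: "t \<in> range f - {0}"
      show "t * ind (\<phi> g (f -` {t})) x = (if t = s then t else 0)"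
      proof (cases "t = s")
        case True then show ?thesis using that by (simp add: ind_def)
      next
        case False
        have "\<phi> g (f -` {t} \<inter> f -` {s}) = \<phi> g (f -` {t}) \<inter> \<phi> g (f -` {s})"
        proof -
          have "f -` {t} \<in> I (- g)" "f -` {s} \<in> I (- g)" using s t that(1) unfolding smp_def by auto
          then show ?thesis by (rule pa_basic(6)[OF pa])
        qed
        moreover have "f -` {t} \<inter> f -` {s} = {}" using False by auto
        ultimately have "\<phi> g (f -` {t}) \<inter> \<phi> g (f -` {s}) = {}" using pa_empty[OF pa, of g] by simp
        then have "x \<notin> \<phi> g (f -` {t})" using that(2) by blast
        then show ?thesis using False by (simp add: ind_def)
      qed
    qed simp
    also have "\<dots> = s" using sr s unfolding smp_def by (simp add: sum.delta')
    finally show ?thesis unfolding act_def by simp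
  qed
  show ?thesis
  proof (intro set_eqI iffI)
    fix x assume x: "x \<in> act \<phi> g f -` {r}"
    then have "(\<Sum>t\<in>range f - {0}. t * ind (\<phi> g (f -` {t})) x) \<noteq> 0" using r unfolding act_def by simp
    then obtain t where t: "t \<in> range f - {0}" "x \<in> \<phi> g (f -` {t})"
    proof -
      assume h: "(\<Sum>t\<in>range f - {0}. t * ind (\<phi> g (f -` {t})) x) \<noteq> 0"
      have "\<exists>t\<in>range f - {0}. t * ind (\<phi> g (f -` {t})) x \<noteq> 0"
      proof (rule ccontr)
        assume "\<not> ?thesis"
        then have "(\<Sum>t\<in>range f - {0}. t * ind (\<phi> g (f -` {t})) x) = 0" by (intro sum.neutral) simp
        then show False using h by simp
      qed
      then obtain t where "t \<in> range f - {0}" "t * ind (\<phi> g (f -` {t})) x \<noteq> 0" by blast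
      moreover have "x \<in> \<phi> g (f -` {t})"
        using calculation(2) unfolding ind_def by (cases "x \<in> \<phi> g (f -` {t})") simp_all
      ultimately show ?thesis using that by blast
    qed
    then have "act \<phi> g f x = t" using key[OF _ t(2)] t(1) by simp
    then show "x \<in> \<phi> g (f -` {r})" using x t by simp
  next
    fix x assume "x \<in> \<phi> g (f -` {r})"
    then show "x \<in> act \<phi> g f -` {r}" using key r by simp
  qed
qed

lemma act_range:
  fixes f :: "'x \<Rightarrow> 'r::comm_ring_1"
  assumes pa: "partial_action B I \<phi>" and s: "smp (I (- g)) f"
  shows "range (act \<phi> g f) \<subseteq> insert 0 (range f)"
proof
  fix r assume "r \<in> range (act \<phi> g f)"
  then obtain x where x: "act \<phi> g f x = r" by auto
  show "r \<in> insert 0 (range f)"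
  proof (cases "r = 0")
    case False
    then have "x \<in> \<phi> g (f -` {r})" using act_pre[OF pa s False] x by blast
    then have "f -` {r} \<noteq> {}" using pa_empty[OF pa] by auto
    then show ?thesis by auto
  qed simp
qed

lemma act_smp:
  fixes f :: "'x \<Rightarrow> 'r::comm_ring_1"
  assumes pa: "partial_action B I \<phi>" and s: "smp (I (- g)) f"
  shows "smp (I g) (act \<phi> g f)"
  unfolding smp_def
proof
  show "finite (range (act \<phi> g f))"
    using act_range[OF pa s] s unfolding smp_def by (meson finite_insert finite_subset)
  show "\<forall>r. r \<noteq> 0 \<longrightarrow> act \<phi> g f -` {r} \<in> I g"
    using act_pre[OF pa s] pa_img[OF pa] s unfolding smp_def by auto
qed

lemma act_zero_fun: "act \<phi> g (\<lambda>_. 0 :: 'r::comm_ring_1) = (\<lambda>_. 0)"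
  unfolding act_def by simp

lemma smp_mult_ind:
  fixes f :: "'x \<Rightarrow> 'r::comm_ring_1"
  assumes "smp A f" "\<And>r. r \<noteq> 0 \<Longrightarrow> f -` {r} \<inter> T \<in> A"
  shows "smp A (\<lambda>x. f x * ind T x)" "smp A (\<lambda>x. ind T x * f x)"
proof -
  have pre: "(\<lambda>x. f x * ind T x) -` {r} = f -` {r} \<inter> T" if "r \<noteq> 0" for r
    using that by (auto simp: ind_def split: if_splits)
  have rng: "range (\<lambda>x. f x * ind T x) \<subseteq> insert 0 (range f)" by (auto simp: ind_def)
  show a: "smp A (\<lambda>x. f x * ind T x)" unfolding smp_def
    using pre assms rng unfolding smp_def by (metis finite_insert finite_subset)
  show "smp A (\<lambda>x. ind T x * f x)" using a by (simp add: mult.commute)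
qed

lemma act_zero:
  fixes f :: "'x \<Rightarrow> 'r::comm_ring_1"
  assumes pa: "partial_action B I \<phi>" and s: "smp B f"
  shows "act \<phi> 0 f = f"
proof (rule fun_eq_pre)
  fix r :: 'r assume r: "r \<noteq> 0"
  have s': "smp (I (- 0)) f" using s pa_basic(2)[OF pa] by simp
  show "act \<phi> 0 f -` {r} = f -` {r}"
    using act_pre[OF pa s' r] pa_basic(3)[OF pa] s r unfolding smp_def by simp
qed




lemma pre_mult_ind:
  fixes f :: "'x \<Rightarrow> 'r::comm_ring_1"
  assumes "r \<noteq> 0"
  shows "(\<lambda>x. f x * ind T x) -` {r} = f -` {r} \<inter> T"
  using assms by (auto simp: ind_def split: if_splits)

lemma act_conj:
  fixes f :: "'x \<Rightarrow> 'r::comm_ring_1"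
  assumes pa: "partial_action B I \<phi>" and s: "smp (I k) f" and T: "T \<in> B"
  shows "act \<phi> k (\<lambda>y. act \<phi> (-k) f y * ind T y)
       = (\<lambda>x. f x * ind (\<phi> k (T \<inter> \<phi> (-k) {y. f y \<noteq> 0})) x)"
proof (rule fun_eq_pre)
  fix r :: 'r assume r: "r \<noteq> 0"
  have s': "smp (I (- (- k))) f" using s by simp
  define h where "h = act \<phi> (-k) f"
  have hs: "smp (I (- k)) h" unfolding h_def by (rule act_smp[OF pa s'])
  have hpre: "h -` {q} = \<phi> (-k) (f -` {q})" if "q \<noteq> 0" for q
    unfolding h_def by (rule act_pre[OF pa s' that])
  have h's: "smp (I (- k)) (\<lambda>y. h y * ind T y)"
  proof (rule smp_mult_ind(1)[OF hs])
    fix q :: 'r assume "q \<noteq> 0"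
    then have "h -` {q} \<in> I (- k)" using hs unfolding smp_def by blast
    then show "h -` {q} \<inter> T \<in> I (- k)" using pa_int[OF pa _ T] by blast
  qed
  have "act \<phi> k (\<lambda>y. h y * ind T y) -` {r} = \<phi> k ((\<lambda>y. h y * ind T y) -` {r})"
    by (rule act_pre[OF pa h's r])
  also have "\<dots> = \<phi> k (\<phi> (-k) (f -` {r}) \<inter> T)"
    using pre_mult_ind[OF r, of h T] hpre[OF r] by simp
  also have "\<dots> = f -` {r} \<inter> \<phi> k (T \<inter> \<phi> (-k) {y. f y \<noteq> 0})"
  proof -
    define A where "A = f -` {r}"
    define S where "S = {y. f y \<noteq> 0}"
    have A: "A \<in> I k" using s r unfolding smp_def A_def by blast
    have S: "S \<in> I k" unfolding S_def by (rule supp_in[OF pa_gbaI[OF pa] s])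
    have AS: "A \<subseteq> S" using r unfolding A_def S_def by auto
    have A': "\<phi> (-k) A \<in> I (-k)" using pa_img[OF pa, of A "-k"] A by simp
    have S': "\<phi> (-k) S \<in> I (-k)" using pa_img[OF pa, of S "-k"] S by simp
    have "\<phi> (-k) A \<subseteq> \<phi> (-k) S" using pa_mono[OF pa, of A "-k" S] A S AS by simp
    then have eq: "\<phi> (-k) A \<inter> T = \<phi> (-k) A \<inter> (T \<inter> \<phi> (-k) S)" by blast
    have TS: "T \<inter> \<phi> (-k) S \<in> I (-k)" using pa_int(2)[OF pa S' T] .
    have "\<phi> k (\<phi> (-k) A \<inter> (T \<inter> \<phi> (-k) S)) = \<phi> k (\<phi> (-k) A) \<inter> \<phi> k (T \<inter> \<phi> (-k) S)"
      using pa_basic(6)[OF pa, of "\<phi> (-k) A" k "T \<inter> \<phi> (-k) S"] A' TS by simp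
    also have "\<phi> k (\<phi> (-k) A) = A" by (rule pa_inv[OF pa A])
    finally show ?thesis using eq unfolding A_def S_def by simp
  qed
  also have "\<dots> = (\<lambda>x. f x * ind (\<phi> k (T \<inter> \<phi> (-k) {y. f y \<noteq> 0})) x) -` {r}"
    using pre_mult_ind[OF r, of f] by simp
  finally show "act \<phi> k (\<lambda>y. act \<phi> (-k) f y * ind T y) -` {r}
       = (\<lambda>x. f x * ind (\<phi> k (T \<inter> \<phi> (-k) {y. f y \<noteq> 0})) x) -` {r}"
    unfolding h_def .
qed


lemma smp_mono: "smp A f \<Longrightarrow> A \<subseteq> A' \<Longrightarrow> smp A' f"
  unfolding smp_def by blast

lemma smp_ind:
  assumes "gen_bool_alg B" "U \<in> B"
  shows "smp B (ind U :: 'x \<Rightarrow> 'r::comm_ring_1)"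
proof -
  have "range (ind U :: 'x \<Rightarrow> 'r) \<subseteq> {0, 1}" by (auto simp: ind_def)
  then have "finite (range (ind U :: 'x \<Rightarrow> 'r))" by (meson finite.emptyI finite_insert finite_subset)
  moreover have "(ind U :: 'x \<Rightarrow> 'r) -` {r} \<in> B" if "r \<noteq> 0" for r
  proof (cases "r = 1")
    case True
    then have "(ind U :: 'x \<Rightarrow> 'r) -` {r} = U" using that by (auto simp: ind_def split: if_splits)
    then show ?thesis using assms by simp
  next
    case False
    then have "(ind U :: 'x \<Rightarrow> 'r) -` {r} = {}" using that by (auto simp: ind_def split: if_splits)
    then show ?thesis using assms unfolding gen_bool_alg_def by simp
  qed
  ultimately show ?thesis unfolding smp_def by blast
qed

lemma left_mult:
  fixes a :: "'g::group_add \<Rightarrow> 'x \<Rightarrow> 'r::comm_ring_1"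
  assumes pa: "partial_action B I \<phi>" and U: "U \<in> B" and a: "\<forall>k. smp (I k) (a k)"
    and nz: "ind U \<noteq> (\<lambda>_. 0 :: 'r)"
  shows "cp_mult \<phi> (delta U 0) a = (\<lambda>k x. ind U x * a k x)"
proof -
  have supp: "{g. delta U (0::'g) g \<noteq> (\<lambda>_. 0 :: 'r)} = {0}" using nz by (auto simp: delta_def)
  have gb: "gen_bool_alg B" by (rule pa_basic(1)[OF pa])
  have i1: "act \<phi> 0 (ind U :: 'x \<Rightarrow> 'r) = ind U" by (rule act_zero[OF pa smp_ind[OF gb U]])
  have i2: "act \<phi> 0 (\<lambda>y. ind U y * a k y) = (\<lambda>y. ind U y * a k y)" for k
  proof (rule act_zero[OF pa])
    have sB: "smp B (a k)" using a smp_mono pa_subB[OF pa] by blast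
    show "smp B (\<lambda>y. ind U y * a k y)"
    proof (rule smp_mult_ind(2)[OF sB])
      fix r :: 'r assume "r \<noteq> 0"
      then show "a k -` {r} \<inter> U \<in> B" using sB U gb unfolding smp_def gen_bool_alg_def by blast
    qed
  qed
  show ?thesis unfolding cp_mult_def supp using i1 i2 by (simp add: delta_def)
qed

lemma right_mult:
  fixes b :: "'g::group_add \<Rightarrow> 'x \<Rightarrow> 'r::comm_ring_1"
  assumes pa: "partial_action B I \<phi>" and U: "U \<in> B" and b: "\<forall>k. smp (I k) (b k)"
    and fin: "finite {g. b g \<noteq> (\<lambda>_. 0)}"
  shows "cp_mult \<phi> b (delta U 0) = (\<lambda>k x. b k x * ind (\<phi> k (U \<inter> \<phi> (-k) {y. b k y \<noteq> 0})) x)"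
proof (intro ext)
  fix k x
  let ?G = "{g. b g \<noteq> (\<lambda>_. 0)}"
  have "cp_mult \<phi> b (delta U 0) k x =
      (\<Sum>g\<in>?G. if g = k then act \<phi> k (\<lambda>y. act \<phi> (-k) (b k) y * ind U y) x else 0)"
    unfolding cp_mult_def
  proof (rule sum.cong)
    fix g assume "g \<in> ?G"
    show "act \<phi> g (\<lambda>y. act \<phi> (- g) (b g) y * delta U 0 (- g + k) y) x =
         (if g = k then act \<phi> k (\<lambda>y. act \<phi> (-k) (b k) y * ind U y) x else 0)"
    proof (cases "g = k")
      case True then show ?thesis by (simp add: delta_def)
    next
      case False
      have "- g + k \<noteq> 0"
      proof
        assume "- g + k = 0"
        then have "g + (- g + k) = g" by simp
        then show False using False by (simp add: add.assoc[symmetric])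
      qed
      then have "(\<lambda>y. act \<phi> (- g) (b g) y * delta U 0 (- g + k) y) = (\<lambda>_. 0)"
        by (simp add: delta_def)
      then show ?thesis using False by (simp add: act_zero_fun)
    qed
  qed simp
  also have "\<dots> = (if k \<in> ?G then act \<phi> k (\<lambda>y. act \<phi> (-k) (b k) y * ind U y) x else 0)"
    using fin by (simp add: sum.delta)
  also have "\<dots> = b k x * ind (\<phi> k (U \<inter> \<phi> (-k) {y. b k y \<noteq> 0})) x"
  proof (cases "k \<in> ?G")
    case True
    then show ?thesis using act_conj[OF pa _ U, of k "b k"] b by simp
  next
    case False
    then show ?thesis by simp
  qed
  finally show "cp_mult \<phi> b (delta U 0) k x = b k x * ind (\<phi> k (U \<inter> \<phi> (-k) {y. b k y \<noteq> 0})) x" .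
qed


lemma cover_Z:
  fixes I1 I2 :: "'g::group_add \<Rightarrow> 'x set set"
  assumes sub: "partial_subaction B1 I1 \<phi>1 B2 I2 \<phi>2"
    and C1: "is_cover C1 B1"
    and Cg: "\<forall>g. is_cover (C g) (I2 g)"
    and cond: "\<forall>g. \<forall>X\<in>C1. \<forall>Y\<in>C1. \<forall>V\<in>C (- g).
                 \<exists>Z\<in>I1 g. X \<inter> \<phi>2 g (Y \<inter> V) \<subseteq> Z"
    and U: "U \<in> B1" and S: "S \<in> I2 k"
  shows "\<exists>Z\<in>I1 k. U \<inter> \<phi>2 k (U \<inter> \<phi>2 (-k) S) \<subseteq> Z"
proof -
  have pa1: "partial_action B1 I1 \<phi>1" and pa2: "partial_action B2 I2 \<phi>2" and B12: "B1 \<subseteq> B2"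
    using sub unfolding partial_subaction_def by auto
  define W where "W = \<phi>2 (-k) S"
  have S': "S \<in> I2 (- (-k))" using S by simp
  have W: "W \<in> I2 (-k)" unfolding W_def by (rule pa_img[OF pa2 S'])
  have c1: "\<forall>U\<in>B1. \<exists>F. finite F \<and> F \<subseteq> C1 \<and> U \<subseteq> \<Union>F" using C1 unfolding is_cover_def by (elim conjE)
  obtain F1 where F1: "finite F1" "F1 \<subseteq> C1" "U \<subseteq> \<Union>F1" using bspec[OF c1 U] by (elim exE conjE)
  have c2: "\<forall>U\<in>I2 (-k). \<exists>F. finite F \<and> F \<subseteq> C (-k) \<and> U \<subseteq> \<Union>F" using spec[OF Cg, of "-k"] unfolding is_cover_def by (elim conjE)
  obtain F where F: "finite F" "F \<subseteq> C (-k)" "W \<subseteq> \<Union>F" using bspec[OF c2 W] by (elim exE conjE)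
  have C1B: "C1 \<subseteq> B2" using C1 B12 unfolding is_cover_def by blast
  have CI: "C (-k) \<subseteq> I2 (-k)" using Cg unfolding is_cover_def by blast
  define zf where "zf = (\<lambda>p. SOME Z. Z \<in> I1 k \<and> fst p \<inter> \<phi>2 k (fst (snd p) \<inter> snd (snd p)) \<subseteq> Z)"
  have zf: "zf p \<in> I1 k \<and> fst p \<inter> \<phi>2 k (fst (snd p) \<inter> snd (snd p)) \<subseteq> zf p" if "p \<in> F1 \<times> F1 \<times> F" for p
  proof -
    obtain X Y V where p: "p = (X, Y, V)" by (cases p) auto
    have "X \<in> C1" "Y \<in> C1" "V \<in> C (- k)" using that F1(2) F(2) p by auto
    then obtain Z0 where "Z0 \<in> I1 k" "X \<inter> \<phi>2 k (Y \<inter> V) \<subseteq> Z0"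
      using cond by blast
    then have "\<exists>Z. Z \<in> I1 k \<and> fst p \<inter> \<phi>2 k (fst (snd p) \<inter> snd (snd p)) \<subseteq> Z"
      using p by auto
    then show ?thesis unfolding zf_def by (rule someI_ex)
  qed
  define Z where "Z = \<Union>(zf ` (F1 \<times> F1 \<times> F))"
  have g1: "gen_bool_alg (I1 k)" by (rule pa_gbaI[OF pa1])
  have Z: "Z \<in> I1 k" unfolding Z_def
  proof (rule gba_union_fin)
    show "{} \<in> I1 k" "\<forall>U\<in>I1 k. \<forall>V\<in>I1 k. U \<union> V \<in> I1 k" using g1 unfolding gen_bool_alg_def by blast+
    show "finite (zf ` (F1 \<times> F1 \<times> F))" using F1(1) F(1) by simp
    show "zf ` (F1 \<times> F1 \<times> F) \<subseteq> I1 k" using zf by blast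
  qed
  define YV where "YV = (\<lambda>(Y, V). Y \<inter> V) ` (F1 \<times> F)"
  have YVs: "YV \<subseteq> I2 (-k)"
  proof
    fix A assume "A \<in> YV"
    then obtain Y V where "Y \<in> F1" "V \<in> F" "A = Y \<inter> V" unfolding YV_def by auto
    then show "A \<in> I2 (-k)" using pa_int(2)[OF pa2, of V "-k" Y] C1B CI F1(2) F(2) by auto
  qed
  have YVf: "finite YV" unfolding YV_def using F1(1) F(1) by simp
  have Un: "\<Union>YV \<in> I2 (-k) \<and> \<phi>2 k (\<Union>YV) = \<Union>(\<phi>2 k ` YV)"
    using pa_Union[OF pa2 YVf, of k] YVs by simp
  have UW: "U \<inter> W \<in> I2 (-k)" using pa_int(2)[OF pa2 W, of U] U B12 by auto
  have "U \<inter> W \<subseteq> \<Union>YV"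
  proof
    fix x assume x: "x \<in> U \<inter> W"
    then obtain X where X: "X \<in> F1" "x \<in> X" using F1(3) by blast
    obtain V where V: "V \<in> F" "x \<in> V" using F(3) x by blast
    have "(X, V) \<in> F1 \<times> F" using X V by simp
    then have "X \<inter> V \<in> YV" unfolding YV_def by force
    then show "x \<in> \<Union>YV" using X V by blast
  qed
  then have "\<phi>2 k (U \<inter> W) \<subseteq> \<phi>2 k (\<Union>YV)" using pa_mono[OF pa2, of "U \<inter> W" k "\<Union>YV"] UW Un by simp
  then have sub1: "\<phi>2 k (U \<inter> W) \<subseteq> \<Union>(\<phi>2 k ` YV)" using Un by simp
  have "U \<inter> \<phi>2 k (U \<inter> W) \<subseteq> Z"
  proof
    fix x assume x: "x \<in> U \<inter> \<phi>2 k (U \<inter> W)"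
    then obtain X where X: "X \<in> F1" "x \<in> X" using F1(3) by blast
    from x sub1 obtain A where A: "A \<in> YV" "x \<in> \<phi>2 k A" by blast
    from A(1) obtain Y V where "Y \<in> F1" "V \<in> F" "A = Y \<inter> V" unfolding YV_def by auto
    then have YV: "Y \<in> F1" "V \<in> F" "x \<in> \<phi>2 k (Y \<inter> V)" using A(2) by auto
    have "(X, Y, V) \<in> F1 \<times> F1 \<times> F" using X YV by simp
    then have "x \<in> zf (X, Y, V)" using zf[of "(X, Y, V)"] X YV by auto
    then show "x \<in> Z" unfolding Z_def using \<open>(X, Y, V) \<in> F1 \<times> F1 \<times> F\<close> by blast
  qed
  then show ?thesis using Z unfolding W_def by blast
qed




lemma P_formula:
  fixes a :: "'g::group_add \<Rightarrow> 'x \<Rightarrow> 'r::comm_ring_1"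
  assumes pa: "partial_action B I \<phi>" and U: "U \<in> B" and a: "a \<in> CP I"
    and nz: "ind U \<noteq> (\<lambda>_. 0 :: 'r)"
  shows "cp_mult \<phi> (cp_mult \<phi> (delta U 0) a) (delta U 0)
    = (\<lambda>k x. (ind U x * a k x) * ind (\<phi> k (U \<inter> \<phi> (-k) {y. ind U y * a k y \<noteq> 0})) x)"
proof -
  have as: "\<forall>k. smp (I k) (a k)"
  proof
    fix k
    have "a k \<in> Lc (I k)" using a unfolding CP_def by blast
    then show "smp (I k) (a k)" by (rule Lc_smp[OF pa_gbaI[OF pa]])
  qed
  have L: "cp_mult \<phi> (delta U 0) a = (\<lambda>k x. ind U x * a k x)" by (rule left_mult[OF pa U as nz])
  have bs: "\<forall>k. smp (I k) (\<lambda>x. ind U x * a k x)"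
  proof
    fix k
    show "smp (I k) (\<lambda>x. ind U x * a k x)"
    proof (rule smp_mult_ind(2))
      show "smp (I k) (a k)" using as by blast
      fix r :: 'r assume "r \<noteq> 0"
      then have "a k -` {r} \<in> I k" using as unfolding smp_def by blast
      then show "a k -` {r} \<inter> U \<in> I k" using pa_int(1)[OF pa _ U] by blast
    qed
  qed
  have fin: "finite {g. (\<lambda>x. ind U x * a g x) \<noteq> (\<lambda>_. 0)}"
  proof (rule finite_subset)
    show "finite {g. a g \<noteq> (\<lambda>_. 0)}" using a unfolding CP_def by blast
    show "{g. (\<lambda>x. ind U x * a g x) \<noteq> (\<lambda>_. 0)} \<subseteq> {g. a g \<noteq> (\<lambda>_. 0)}" by auto
  qed
  show ?thesis unfolding L using right_mult[OF pa U bs fin] by simp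
qed

lemma CP_mono:
  assumes "\<forall>t. I1 t \<subseteq> I2 t" "a \<in> CP I1"
  shows "a \<in> CP I2"
proof -
  have "a g \<in> Lc (I2 g)" for g
  proof -
    have "a g \<in> Lc (I1 g)" using assms(2) unfolding CP_def by blast
    then obtain S c where "finite S" "S \<subseteq> I1 g" "a g = (\<lambda>x. \<Sum>U\<in>S. c U * ind U x)"
      unfolding Lc_def by blast
    moreover have "S \<subseteq> I2 g" using calculation(2) assms(1) by blast
    ultimately show ?thesis unfolding Lc_def by blast
  qed
  then show ?thesis using assms(2) unfolding CP_def by blast
qed

theorem theorem4p7:
  fixes B1 B2 :: "'x set set"
    and I1 I2 :: "'g::group_add \<Rightarrow> 'x set set"
    and \<phi>1 \<phi>2 :: "'g \<Rightarrow> 'x set \<Rightarrow> 'x set"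
    and C1 :: "'x set set"
    and C :: "'g \<Rightarrow> 'x set set"
  assumes sub: "partial_subaction B1 I1 \<phi>1 B2 I2 \<phi>2"
    and ideal: "gba_ideal B1 B2"
    and C1: "is_cover C1 B1"
    and Cg: "\<forall>g. is_cover (C g) (I2 g)"
    and cond: "\<forall>g. \<forall>X\<in>C1. \<forall>Y\<in>C1. \<forall>V\<in>C (- g).
                 \<exists>Z\<in>I1 g. X \<inter> \<phi>2 g (Y \<inter> V) \<subseteq> Z"
    and U: "U \<in> B1"
  shows "{cp_mult \<phi>2 (cp_mult \<phi>2 (delta U 0) a) (delta U 0) :: 'g \<Rightarrow> 'x \<Rightarrow> 'r::comm_ring_1
            | a. a \<in> CP I1}
       = {cp_mult \<phi>2 (cp_mult \<phi>2 (delta U 0) a) (delta U 0) | a. a \<in> CP I2}"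
proof -
  have pa1: "partial_action B1 I1 \<phi>1" and pa2: "partial_action B2 I2 \<phi>2" and B12: "B1 \<subseteq> B2"
    and I12: "\<forall>t. I1 t \<subseteq> I2 t"
    using sub unfolding partial_subaction_def by simp_all
  have U2: "U \<in> B2" using U B12 by blast
  define P where "P = (\<lambda>a :: 'g \<Rightarrow> 'x \<Rightarrow> 'r. cp_mult \<phi>2 (cp_mult \<phi>2 (delta U 0) a) (delta U 0))"
  have sub1: "{P a | a. a \<in> CP I1} \<subseteq> {P a | a. a \<in> CP I2}"
  proof
    fix w assume "w \<in> {P a | a. a \<in> CP I1}"
    then obtain a where "a \<in> CP I1" "w = P a" by blast
    then show "w \<in> {P a | a. a \<in> CP I2}" using CP_mono[OF I12] by blast
  qed
  have sub2: "{P a | a. a \<in> CP I2} \<subseteq> {P a | a. a \<in> CP I1}"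
  proof (cases "ind U = (\<lambda>_. 0 :: 'r)")
    case True
    have d0: "delta U (0::'g) = (\<lambda>_ _. 0 :: 'r)" using True by (auto simp: delta_def)
    have Pz: "P a = (\<lambda>_ _. 0)" for a unfolding P_def d0 cp_mult_def by simp
    have "(\<lambda>_ _. 0 :: 'r) \<in> CP I1"
    proof -
      have "(\<lambda>_. 0 :: 'r) \<in> Lc (I1 g)" for g
        unfolding Lc_def by (rule CollectI, rule exI[of _ "{}"], simp)
      then show ?thesis unfolding CP_def by simp
    qed
    show ?thesis
    proof
      fix w assume "w \<in> {P a | a. a \<in> CP I2}"
      then obtain a where "w = P a" by blast
      then have "w = P (\<lambda>_ _. 0)" using Pz by simp
      then show "w \<in> {P a | a. a \<in> CP I1}" using \<open>(\<lambda>_ _. 0 :: 'r) \<in> CP I1\<close> by blast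
    qed
  next
    case False
    note nz = False
    show ?thesis
    proof
      fix w assume "w \<in> {P a | a. a \<in> CP I2}"
      then obtain a where a: "a \<in> CP I2" and w: "w = P a" by blast
      define S where "S = (\<lambda>k. {y. ind U y * a k y \<noteq> (0::'r)})"
      define Q where "Q = (\<lambda>k. \<phi>2 k (U \<inter> \<phi>2 (-k) (S k)))"
      have PF: "P a = (\<lambda>k x. (ind U x * a k x) * ind (Q k) x)"
        unfolding P_def Q_def S_def by (rule P_formula[OF pa2 U2 a nz])
      define a' where "a' = P a"
      have as2: "smp (I2 k) (a k)" for k
      proof -
        have "a k \<in> Lc (I2 k)" using a unfolding CP_def by blast
        then show "smp (I2 k) (a k)" by (rule Lc_smp[OF pa_gbaI[OF pa2]])
      qed
      have Sk: "S k \<in> I2 k" for k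
      proof -
        have "smp (I2 k) (\<lambda>x. ind U x * a k x)"
        proof (rule smp_mult_ind(2)[OF as2])
          fix r :: 'r assume "r \<noteq> 0"
          then have "a k -` {r} \<in> I2 k" using as2 unfolding smp_def by blast
          then show "a k -` {r} \<inter> U \<in> I2 k" using pa_int(1)[OF pa2 _ U2] by blast
        qed
        then show ?thesis unfolding S_def by (rule supp_in[OF pa_gbaI[OF pa2]])
      qed
      have USk: "U \<inter> \<phi>2 (-k) (S k) \<in> I2 (-k)" for k
      proof -
        have "S k \<in> I2 (- (-k))" using Sk by simp
        then have "\<phi>2 (-k) (S k) \<in> I2 (-k)" by (rule pa_img[OF pa2])
        then show ?thesis using pa_int(2)[OF pa2 _ U2] by blast
      qed
      have Qk: "Q k \<in> I2 k" for k unfolding Q_def by (rule pa_img[OF pa2 USk])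
      have a'e: "a' k = (\<lambda>x. ind U x * a k x * ind (Q k) x)" for k unfolding a'_def PF by simp
      have a'1: "a' \<in> CP I1"
      proof -
        have "{k. a' k \<noteq> (\<lambda>_. 0)} \<subseteq> {k. a k \<noteq> (\<lambda>_. 0)}" unfolding a'e by auto
        moreover have "finite {k. a k \<noteq> (\<lambda>_. 0)}" using a unfolding CP_def by blast
        ultimately have fin: "finite {k. a' k \<noteq> (\<lambda>_. 0)}" by (rule finite_subset)
        have "smp (I1 k) (a' k)" for k
        proof -
          have rng: "range (a' k) \<subseteq> insert 0 (range (a k))" unfolding a'e by (auto simp: ind_def)
          have "finite (range (a' k))" using as2[of k] rng unfolding smp_def by (meson finite_insert finite_subset)
          moreover have "a' k -` {r} \<in> I1 k" if r: "r \<noteq> 0" for r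
          proof -
            define p where "p = U \<inter> a k -` {r} \<inter> Q k"
            have pe: "a' k -` {r} = p" unfolding a'e p_def using r by (auto simp: ind_def split: if_splits)
            have "a k -` {r} \<in> I2 k" using as2 r unfolding smp_def by blast
            then have "U \<inter> a k -` {r} \<in> I2 k" using pa_int(2)[OF pa2 _ U2] by blast
            then have "p \<in> I2 k" unfolding p_def using pa_int(1)[OF pa2 _ pa_subB[OF pa2 Qk]] by blast
            then have pB2: "p \<in> B2" by (rule pa_subB[OF pa2])
            have "U \<inter> p \<in> B1" using ideal U pB2 unfolding gba_ideal_def by blast
            moreover have "U \<inter> p = p" unfolding p_def by blast
            ultimately have pB1: "p \<in> B1" by simp
            obtain Z where Z: "Z \<in> I1 k" "U \<inter> \<phi>2 k (U \<inter> \<phi>2 (-k) (S k)) \<subseteq> Z"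
              using cover_Z[OF sub C1 Cg cond U Sk] by blast
            have "p \<subseteq> Z" using Z(2) unfolding p_def Q_def by blast
            have "Z \<inter> p \<in> I1 k" using pa_basic(4)[OF pa1, of k] Z(1) pB1 unfolding gba_ideal_def by blast
            moreover have "Z \<inter> p = p" using \<open>p \<subseteq> Z\<close> by blast
            ultimately show ?thesis using pe by simp
          qed
          ultimately show ?thesis unfolding smp_def by blast
        qed
        then have "\<forall>k. a' k \<in> Lc (I1 k)" using smp_Lc by blast
        then show ?thesis unfolding CP_def using fin by blast
      qed
      have a'2: "a' \<in> CP I2" using CP_mono[OF I12 a'1] .
      have "P a' = P a"
      proof -
        have PF': "P a' = (\<lambda>k x. (ind U x * a' k x) * ind (\<phi>2 k (U \<inter> \<phi>2 (-k) {y. ind U y * a' k y \<noteq> 0})) x)"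
          unfolding P_def by (rule P_formula[OF pa2 U2 a'2 nz])
        have s1: "{y. ind U y * a' k y \<noteq> 0} = S k \<inter> Q k" for k
          unfolding a'e S_def by (auto simp: ind_def split: if_splits)
        have s2: "\<phi>2 k (U \<inter> \<phi>2 (-k) (S k \<inter> Q k)) = Q k" for k
        proof -
          have "S k \<in> I2 (- (-k))" "Q k \<in> I2 (- (-k))" using Sk Qk by simp_all
          then have "\<phi>2 (-k) (S k \<inter> Q k) = \<phi>2 (-k) (S k) \<inter> \<phi>2 (-k) (Q k)"
            by (rule pa_basic(6)[OF pa2])
          moreover have "\<phi>2 (-k) (Q k) = U \<inter> \<phi>2 (-k) (S k)"
            using pa_inv[OF pa2 USk[of k]] unfolding Q_def by simp
          ultimately have "U \<inter> \<phi>2 (-k) (S k \<inter> Q k) = U \<inter> \<phi>2 (-k) (S k)" by blast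
          then show ?thesis unfolding Q_def by simp
        qed
        have "P a' = (\<lambda>k x. (ind U x * a' k x) * ind (Q k) x)"
          unfolding PF' s1 s2 by (rule refl)
        also have "\<dots> = P a" unfolding PF a'e
        proof (intro ext)
          fix k x
          show "ind U x * (ind U x * a k x * ind (Q k) x) * ind (Q k) x = ind U x * a k x * ind (Q k) x"
            by (cases "x \<in> U"; cases "x \<in> Q k"; simp add: ind_def)
        qed
        finally show ?thesis .
      qed
      then have "w = P a'" using w by simp
      then show "w \<in> {P a | a. a \<in> CP I1}"
        unfolding mem_Collect_eq by (intro exI[of _ a'] conjI a'1)
    qed
  qed
  have "{P a | a. a \<in> CP I1} = {P a | a. a \<in> CP I2}" using sub1 sub2 by (rule subset_antisym)
  then show ?thesis unfolding P_def .
qed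



end
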